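(* If $\mathcal{C}\subset\mathbb{R}_{\ge2}$ is $1$-spaced (i.e. $|\alpha-\beta|\ge1$ for all distinct $\alpha,\beta\in\mathcal{C}$), then \[ \mathop{\sum\sum}_{\alpha,\beta\in\mathcal{C},\ \alpha>\beta} \frac{1}{\alpha\log \alpha} \cdot \frac{1}{\beta\log \beta} \cdot \bigg(\frac{1}{\beta}+\frac{\log \beta}{\alpha/\beta}\bigg) \ll \kappa(\mathcal{C}), \] with an absolute implied constant.
   Context: For $\alpha>0$, $\kappa(\alpha)=\frac1\alpha\prod_{p\le\alpha}(1-\frac1p)$ (product over primes), and $\kappa(\mathcal{C})=\sum_{\alpha\in\mathcal{C}}\kappa(\alpha)$. *)

theory Defs
  imports "HOL-Analysis.Analysis" "HOL-Library.Extended_Nonnegative_Real"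
    "HOL-Computational_Algebra.Primes"
begin

definition kappa :: "real \<Rightarrow> real" where
  "kappa \<alpha> = (1 / \<alpha>) * (\<Prod>p\<in>{p::nat. prime p \<and> real p \<le> \<alpha>}. (1 - 1 / real p))"

definition one_spaced :: "real set \<Rightarrow> bool" where
  "one_spaced C \<longleftrightarrow> (\<forall>\<alpha>\<in>C. \<forall>\<beta>\<in>C. \<alpha> \<noteq> \<beta> \<longrightarrow> \<bar>\<alpha> - \<beta>\<bar> \<ge> 1)"

definition kappa_set :: "real set \<Rightarrow> ennreal" where
  "kappa_set C = (\<Sum>\<^sub>\<infinity>\<alpha>\<in>C. ennreal (kappa \<alpha>))"

end

theory Submission
  imports Defs
begin

lemma mvt_step:
  fixes s y :: real
  assumes s: "s > 1" and y: "y \<ge> 1"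
  shows "(y+1) powr (-s) \<le> (y powr (1-s) - (y+1) powr (1-s)) / (s-1)"
proof -
  have "\<exists>z. y < z \<and> z < y+1 \<and> (y+1) powr (1-s) - y powr (1-s) = ((y+1) - y) * ((1-s) * z powr (1-s-1))"
  proof (intro MVT2)
    fix x assume "y \<le> x" "x \<le> y+1"
    then show "((\<lambda>a. a powr (1 - s)) has_real_derivative (1 - s) * x powr (1-s-1)) (at x)"
      using y has_real_derivative_powr[of x "1-s"] by simp
  qed simp
  then obtain z where z: "y < z" "z < y+1" "(y+1) powr (1-s) - y powr (1-s) = (1-s) * z powr (-s)"
    by (auto simp: algebra_simps)
  have "(y+1) powr (-s) \<le> z powr (-s)"
    using z y s by (intro powr_mono2') auto
  then have "(s-1) * (y+1) powr (-s) \<le> (s-1) * z powr (-s)" using s by simp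
  also have "\<dots> = y powr (1-s) - (y+1) powr (1-s)" using z(3) by (simp add: algebra_simps)
  finally show ?thesis using s by (simp add: field_simps)
qed

lemma zeta_partial:
  fixes s :: real
  assumes s: "s > 1" and N: "N \<ge> 1"
  shows "(\<Sum>k\<in>{1..N}. real k powr (-s)) \<le> s/(s-1) - real N powr (1-s)/(s-1)"
  using N
proof (induction N rule: dec_induct)
  case base
  have "s/(s-1) - 1/(s-1) = 1" using s by (simp add: diff_divide_distrib[symmetric])
  then show ?case by simp
next
  case (step n)
  have "(\<Sum>k\<in>{1..Suc n}. real k powr (-s)) = (\<Sum>k\<in>{1..n}. real k powr (-s)) + (real n + 1) powr (-s)"
    by (simp add: add.commute)
  also have "\<dots> \<le> s/(s-1) - real n powr (1-s)/(s-1) + (real n powr (1-s) - (real n+1) powr (1-s)) / (s-1)"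
    using step.IH mvt_step[OF s, of "real n"] step.hyps by simp
  also have "\<dots> = s/(s-1) - real (Suc n) powr (1-s)/(s-1)"
    by (simp add: diff_divide_distrib add_divide_distrib add.commute)
  finally show ?case .
qed

lemma zeta_bound:
  fixes s :: real
  assumes s: "s > 1"
  shows "(\<Sum>k\<in>{1..N}. real k powr (-s)) \<le> s/(s-1)"
proof (cases "N \<ge> 1")
  case True
  have "real N powr (1-s)/(s-1) \<ge> 0" using s by simp
  then show ?thesis using zeta_partial[OF s True] by linarith
next
  case False
  then show ?thesis using s by simp
qed

lemma prime_factors_prod_set:
  fixes X :: "nat set"
  assumes "finite X" "\<forall>p\<in>X. prime p"
  shows "prime_factors (\<Prod>X) = X"
proof -
  have "0 \<notin> id ` X" using assms by auto
  then have "prime_factors (prod id X) = \<Union>((prime_factors \<circ> id) ` X)"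
    using prime_factors_prod[OF assms(1)] by blast
  also have "\<dots> = X" using assms(2) by (auto simp: prime_prime_factors)
  finally show ?thesis by simp
qed

lemma euler_prod_bound:
  fixes s :: real and P :: "nat set"
  assumes s: "s > 1" and P: "finite P" "\<forall>p\<in>P. prime p"
  shows "(\<Prod>p\<in>P. 1 + real p powr (-s)) \<le> s/(s-1)"
proof -
  have "(\<Prod>p\<in>P. 1 + real p powr (-s)) = (\<Prod>p\<in>P. real p powr (-s) + 1)"
    by (simp add: add.commute)
  also have "\<dots> = (\<Sum>X\<in>Pow P. (\<Prod>p\<in>X. real p powr (-s)))"
    using prod_add[OF P(1), of "\<lambda>p. real p powr (-s)" "\<lambda>_. 1"] by simp
  also have "\<dots> = (\<Sum>X\<in>Pow P. real (\<Prod>X) powr (-s))"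
    by (simp add: prod_powr_distrib)
  also have "\<dots> = (\<Sum>m\<in>(\<lambda>X. \<Prod>X) ` Pow P. real m powr (-s))"
  proof (subst sum.reindex)
    show "inj_on (\<lambda>X. \<Prod>X) (Pow P)"
    proof (rule inj_onI)
      fix X Y assume XY: "X \<in> Pow P" "Y \<in> Pow P" "\<Prod>X = \<Prod>Y"
      have fX: "finite X" "finite Y" using XY P finite_subset by auto
      have "X = prime_factors (\<Prod>X)" using prime_factors_prod_set[OF fX(1)] XY P by auto
      also have "\<dots> = prime_factors (\<Prod>Y)" using XY by simp
      also have "\<dots> = Y" using prime_factors_prod_set[OF fX(2)] XY P by auto
      finally show "X = Y" .
    qed
  qed simp
  also have "\<dots> \<le> (\<Sum>m\<in>{1..\<Prod>P}. real m powr (-s))"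
  proof (rule sum_mono2)
    show "(\<lambda>X. \<Prod>X) ` Pow P \<subseteq> {1..\<Prod>P}"
    proof
      fix m assume "m \<in> (\<lambda>X. \<Prod>X) ` Pow P"
      then obtain X where X: "X \<subseteq> P" "m = \<Prod>X" by auto
      have pos: "\<Prod>P > 0" using P by (auto intro!: prod_pos simp: prime_gt_0_nat)
      have "\<Prod>X dvd \<Prod>P" using X P by (intro prod_dvd_prod_subset) auto
      then have "\<Prod>X \<le> \<Prod>P" using pos by (intro dvd_imp_le) auto
      moreover have "\<Prod>X > 0" using X P by (auto intro!: prod_pos simp: prime_gt_0_nat)
      ultimately show "m \<in> {1..\<Prod>P}" using X by auto
    qed
  qed auto
  also have "\<dots> \<le> s/(s-1)" by (rule zeta_bound[OF s])
  finally show ?thesis .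
qed

lemma card_multiples_ge:
  fixes p n :: nat
  assumes "p > 0"
  shows "n div p \<le> card {k\<in>{1..n}. p dvd k}"
proof -
  have "card ((\<lambda>j. j*p) ` {1..n div p}) = n div p"
    using assms by (subst card_image) (auto simp: inj_on_def)
  moreover have "(\<lambda>j. j*p) ` {1..n div p} \<subseteq> {k\<in>{1..n}. p dvd k}"
  proof
    fix k assume "k \<in> (\<lambda>j. j*p) ` {1..n div p}"
    then obtain j where j: "1 \<le> j" "j \<le> n div p" "k = j*p" by auto
    have "j*p \<le> (n div p) * p" using j by simp
    also have "\<dots> \<le> n" by simp
    finally show "k \<in> {k\<in>{1..n}. p dvd k}" using j assms by auto
  qed
  then have "card ((\<lambda>j. j*p) ` {1..n div p}) \<le> card {k\<in>{1..n}. p dvd k}"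
    by (intro card_mono) auto
  ultimately show ?thesis by simp
qed

lemma ln_ge_sum_prime_divisors:
  fixes k :: nat
  assumes "k \<ge> 1"
  shows "(\<Sum>p\<in>prime_factors k. ln (real p)) \<le> ln (real k)"
proof -
  have "(\<Prod>p\<in>prime_factors k. p) dvd (\<Prod>p\<in>prime_factors k. p ^ multiplicity p k)"
  proof (rule prod_dvd_prod)
    fix p assume "p \<in> prime_factors k"
    then have "multiplicity p k > 0" using assms
      by (simp add: prime_factors_multiplicity)
    then show "p dvd p ^ multiplicity p k" by (simp add: dvd_power)
  qed
  also have "\<dots> = k" using assms prod_prime_factors[of k] by simp
  finally have "(\<Prod>p\<in>prime_factors k. p) \<le> k" using assms by (intro dvd_imp_le) auto
  then have "real (\<Prod>p\<in>prime_factors k. p) \<le> real k" by (metis of_nat_le_iff)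
  moreover have pos: "real (\<Prod>p\<in>prime_factors k. p) > 0"
    by (auto intro!: prod_pos simp: prime_factors_gt_0_nat)
  ultimately have "ln (real (\<Prod>p\<in>prime_factors k. p)) \<le> ln (real k)" by simp
  moreover have "ln (real (\<Prod>p\<in>prime_factors k. p)) = (\<Sum>p\<in>prime_factors k. ln (real p))"
    by (subst of_nat_prod, subst ln_prod) (auto simp: prime_factors_gt_0_nat)
  ultimately show ?thesis by simp
qed

lemma legendre_ineq:
  fixes n :: nat
  shows "(\<Sum>p\<in>{p. prime p \<and> p \<le> n}. real (n div p) * ln (real p)) \<le> ln (fact n)"
proof -
  define Pn where "Pn = {p. prime p \<and> p \<le> n}"
  have fin: "finite Pn" unfolding Pn_def by auto
  have "(\<Sum>p\<in>Pn. real (n div p) * ln (real p)) \<le> (\<Sum>p\<in>Pn. real (card {k\<in>{1..n}. p dvd k}) * ln (real p))"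
  proof (rule sum_mono)
    fix p assume "p \<in> Pn"
    then have p: "prime p" "p > 0" by (auto simp: Pn_def prime_gt_0_nat)
    have "real (n div p) \<le> real (card {k\<in>{1..n}. p dvd k})"
      using card_multiples_ge[OF p(2), of n] by (metis of_nat_le_iff)
    moreover have "ln (real p) \<ge> 0" using p by simp
    ultimately show "real (n div p) * ln (real p) \<le> real (card {k\<in>{1..n}. p dvd k}) * ln (real p)"
      by (rule mult_right_mono)
  qed
  also have "\<dots> = (\<Sum>p\<in>Pn. \<Sum>k\<in>{1..n}. if p dvd k then ln (real p) else 0)"
  proof (rule sum.cong)
    fix p
    have "(\<Sum>k\<in>{1..n}. if p dvd k then ln (real p) else 0) = (\<Sum>k\<in>{k\<in>{1..n}. p dvd k}. ln (real p))"
      by (rule sum.inter_filter[symmetric]) simp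
    then show "real (card {k\<in>{1..n}. p dvd k}) * ln (real p) = (\<Sum>k\<in>{1..n}. if p dvd k then ln (real p) else 0)"
      by simp
  qed simp
  also have "\<dots> = (\<Sum>k\<in>{1..n}. \<Sum>p\<in>Pn. if p dvd k then ln (real p) else 0)"
    by (rule sum.swap)
  also have "\<dots> = (\<Sum>k\<in>{1..n}. \<Sum>p\<in>prime_factors k. ln (real p))"
  proof (rule sum.cong)
    fix k assume k: "k \<in> {1..n}"
    have "(\<Sum>p\<in>Pn. if p dvd k then ln (real p) else 0) = (\<Sum>p\<in>{p\<in>Pn. p dvd k}. ln (real p))"
      using fin by (simp add: sum.inter_filter)
    also have "{p\<in>Pn. p dvd k} = prime_factors k"
      using k by (auto simp: Pn_def prime_factors_dvd intro: order.trans[OF dvd_imp_le])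
    finally show "(\<Sum>p\<in>Pn. if p dvd k then ln (real p) else 0) = (\<Sum>p\<in>prime_factors k. ln (real p))" .
  qed simp
  also have "\<dots> \<le> (\<Sum>k\<in>{1..n}. ln (real k))"
    by (intro sum_mono ln_ge_sum_prime_divisors) auto
  also have "\<dots> = ln (fact n)"
  proof -
    have "(fact n :: real) = (\<Prod>k\<in>{1..n}. real k)" by (simp add: fact_prod)
    moreover have "ln (\<Prod>k\<in>{1..n}. real k) = (\<Sum>k\<in>{1..n}. ln (real k))"
      by (subst ln_prod) auto
    ultimately show ?thesis by simp
  qed
  finally show ?thesis unfolding Pn_def .
qed

lemma sum_lnp_over_p:
  fixes n :: nat
  assumes n: "n \<ge> 1"
  shows "(\<Sum>p\<in>{p. prime p \<and> p \<le> n}. ln (real p) / real p) \<le> 2 * ln (real n)"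
proof -
  have "(\<Sum>p\<in>{p. prime p \<and> p \<le> n}. (real n / 2) * (ln (real p) / real p))
      \<le> (\<Sum>p\<in>{p. prime p \<and> p \<le> n}. real (n div p) * ln (real p))"
  proof (rule sum_mono)
    fix p assume p: "p \<in> {p. prime p \<and> p \<le> n}"
    then have p0: "p > 0" "prime p" "p \<le> n" by (auto simp: prime_gt_0_nat)
    have "n div p > 0" using p0 div_greater_zero_iff[of n p] by blast
    then have d1: "n div p \<ge> 1" by simp
    have "n = p * (n div p) + n mod p" by simp
    moreover have "n mod p < p" using p0 by simp
    ultimately have "n < p * (n div p) + p" by linarith
    also have "\<dots> \<le> p * (n div p) + p * (n div p)" using d1 by simp
    finally have "n \<le> 2 * (n div p * p)" by (simp add: mult.commute)
    then have "real n \<le> real (2 * (n div p * p))" by (simp only: of_nat_le_iff)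
    then have h: "real n / 2 \<le> real (n div p) * real p" by simp
    have "(real n / 2) * (ln (real p) / real p) \<le> (real (n div p) * real p) * (ln (real p) / real p)"
      using h p0 by (intro mult_right_mono) auto
    also have "\<dots> = real (n div p) * ln (real p)" using p0 by simp
    finally show "(real n / 2) * (ln (real p) / real p) \<le> real (n div p) * ln (real p)" .
  qed
  also have "\<dots> \<le> ln (fact n)" by (rule legendre_ineq)
  also have "\<dots> \<le> ln (real (n ^ n))"
    using fact_le_power[of n, where 'a=real] by (intro ln_mono) auto
  also have "\<dots> = real n * ln (real n)" using n by (simp add: ln_realpow)
  finally have "(real n / 2) * (\<Sum>p\<in>{p. prime p \<and> p \<le> n}. ln (real p) / real p) \<le> real n * ln (real n)"
    by (simp add: sum_distrib_left)
  then have "real n * ((\<Sum>p\<in>{p. prime p \<and> p \<le> n}. ln (real p) / real p) / 2) \<le> real n * ln (real n)"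
    by simp
  then have "(\<Sum>p\<in>{p. prime p \<and> p \<le> n}. ln (real p) / real p) / 2 \<le> ln (real n)"
    using n by (subst (asm) mult_le_cancel_left_pos) auto
  then show ?thesis by simp
qed

lemma local_bound:
  fixes p L s :: real
  assumes p: "p \<ge> 2" and L: "L > 0" and s: "s = 1 + 1/L"
  shows "1 / (1 - 1/p) \<le> (1 + p powr (-s)) * exp (2/p^2 + ln p / (p*L))"
proof -
  define a where "a = 1/p"
  define b where "b = p powr (-s)"
  have a0: "a > 0" "a \<le> 1/2" using p by (auto simp: a_def field_simps)
  have "b = exp ((-s) * ln p)" using p by (simp add: b_def powr_def)
  also have "(-s) * ln p = - ln p + (- (ln p / L))" using s by (simp add: algebra_simps)
  also have "exp (- ln p + (- (ln p / L))) = exp (- ln p) * exp (- (ln p / L))"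
    by (rule exp_add)
  also have "exp (- ln p) = a" using p by (simp add: exp_minus a_def inverse_eq_divide)
  finally have b: "b = a * exp (- (ln p / L))" .
  have lnp: "ln p \<ge> 0" using p by simp
  have "exp (- (ln p / L)) \<le> 1" using lnp L by simp
  then have ba: "b \<le> a" using b a0 by (simp add: mult_left_le)
  have b0: "b \<ge> 0" using b a0 by simp
  have "1 - ln p / L \<le> exp (- (ln p / L))" using exp_ge_add_one_self[of "- (ln p / L)"] by simp
  then have "a * (1 - ln p / L) \<le> a * exp (- (ln p / L))" using a0 by (intro mult_left_mono) auto
  then have "a * (1 - ln p / L) \<le> b" using b by simp
  then have abd: "a - b \<le> ln p / (p*L)" by (simp add: a_def algebra_simps)
  have "1 / (1 - a) \<le> (1 + a) * (1 + 2*a^2)"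
  proof -
    have "(1 - a) * ((1 + a) * (1 + 2*a^2)) = 1 + a^2 * (1 - 2*a^2)" by (simp add: algebra_simps power2_eq_square power4_eq_xxxx)
    also have "\<dots> \<ge> 1"
    proof -
      have "a^2 \<le> (1/2)^2" using a0 by (intro power_mono) auto
      then have "a^2 \<le> 1/4" by (simp add: power2_eq_square)
      then have "1 - 2*a^2 \<ge> 0" by simp
      then show ?thesis by simp
    qed
    finally have "1 \<le> (1 - a) * ((1 + a) * (1 + 2*a^2))" .
    moreover have "1 - a > 0" using a0 by simp
    ultimately show ?thesis by (simp add: divide_le_eq mult.commute)
  qed
  also have "\<dots> \<le> (1 + a) * exp (2*a^2)"
    using a0 exp_ge_add_one_self[of "2*a^2"] by (intro mult_left_mono) auto
  also have "1 + a \<le> (1 + b) * exp (a - b)"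
  proof -
    have "b * b \<le> a * b" using ba b0 by (rule mult_right_mono)
    then have "1 + a \<le> (1 + b) * (1 + (a - b))" by (simp add: algebra_simps)
    also have "\<dots> \<le> (1 + b) * exp (a - b)" using b0 exp_ge_add_one_self[of "a-b"] by (intro mult_left_mono) auto
    finally show ?thesis .
  qed
  then have "(1 + a) * exp (2*a^2) \<le> (1 + b) * exp (a - b) * exp (2*a^2)" by simp
  also have "\<dots> = (1 + b) * exp (2*a^2 + (a - b))" by (simp add: exp_add mult_ac)
  also have "\<dots> \<le> (1 + b) * exp (2/p^2 + ln p / (p*L))"
    using abd b0 by (intro mult_left_mono) (auto simp: a_def power_one_over)
  finally show ?thesis by (simp add: a_def b_def)
qed

lemma sum_inv_sq_upto:
  fixes M :: nat
  assumes "M \<ge> 1"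
  shows "(\<Sum>k\<in>{2..M}. 1 / real k ^ 2) \<le> 1 - 1 / real M"
  using assms
proof (induction M rule: dec_induct)
  case base
  then show ?case by simp
next
  case (step m)
  have "{2..Suc m} = insert (Suc m) {2..m}" using step.hyps by auto
  then have "(\<Sum>k\<in>{2..Suc m}. 1 / real k ^ 2) = 1 / real (Suc m) ^ 2 + (\<Sum>k\<in>{2..m}. 1 / real k ^ 2)"
    by simp
  also have "\<dots> \<le> 1 / real (Suc m) ^ 2 + (1 - 1 / real m)" using step.IH by simp
  also have "1 / real (Suc m) ^ 2 \<le> 1 / real m - 1 / real (Suc m)"
  proof -
    have m: "real m \<ge> 1" using step.hyps by simp
    have e1: "1 / real m - 1 / real (Suc m) = 1 / (real m * (1 + real m))" using m by (simp add: field_simps)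
    have "real m * (1 + real m) \<le> (1 + real m) * (1 + real m)" using m by (simp add: algebra_simps)
    moreover have "real (Suc m) ^ 2 = (1 + real m) * (1 + real m)" by (simp add: power2_eq_square)
    ultimately have le: "real m * (1 + real m) \<le> real (Suc m) ^ 2" by linarith
    have pos: "real m * (1 + real m) > 0" using m by simp
    have "1 / real (Suc m) ^ 2 \<le> 1 / (real m * (1 + real m))"
      using le pos by (intro divide_left_mono) auto
    then show ?thesis using e1 by simp
  qed
  finally show ?case by simp
qed

lemma sum_inv_sq_nat:
  fixes S :: "nat set"
  assumes "finite S" "S \<subseteq> {2..}"
  shows "(\<Sum>k\<in>S. 1 / real k ^ 2) \<le> 1"
proof (cases "S = {}")
  case True then show ?thesis by simp
next
  case False
  define M where "M = Max S"
  have "M \<in> S" using Max_in[OF assms(1) False] by (simp add: M_def)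
  then have M: "M \<ge> 2" using assms(2) by auto
  have "S \<subseteq> {2..M}" using assms Max_ge[OF assms(1)] by (auto simp: M_def)
  then have "(\<Sum>k\<in>S. 1 / real k ^ 2) \<le> (\<Sum>k\<in>{2..M}. 1 / real k ^ 2)"
    by (intro sum_mono2) auto
  also have "\<dots> \<le> 1 - 1 / real M" using M by (intro sum_inv_sq_upto) auto
  also have "\<dots> \<le> 1" by simp
  finally show ?thesis .
qed

lemma primes_le_real_eq:
  fixes x :: real
  assumes "x \<ge> 0"
  shows "{p::nat. prime p \<and> real p \<le> x} = {p. prime p \<and> p \<le> nat \<lfloor>x\<rfloor>}"
proof -
  have "real p \<le> x \<longleftrightarrow> p \<le> nat \<lfloor>x\<rfloor>" for p :: nat
  proof
    assume "real p \<le> x" then show "p \<le> nat \<lfloor>x\<rfloor>" by (rule le_nat_floor)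
  next
    assume "p \<le> nat \<lfloor>x\<rfloor>"
    then have "real p \<le> real (nat \<lfloor>x\<rfloor>)" by simp
    also have "\<dots> \<le> x" using assms by simp
    finally show "real p \<le> x" .
  qed
  then show ?thesis by auto
qed

lemma mertens_lower:
  fixes x :: real
  assumes x: "x \<ge> 2"
  shows "(\<Prod>p\<in>{p::nat. prime p \<and> real p \<le> x}. (1 - 1/real p)) \<ge> exp (-4) / (3 * ln x)"
proof -
  define n where "n = nat \<lfloor>x\<rfloor>"
  define Px where "Px = {p::nat. prime p \<and> p \<le> n}"
  have PxE: "{p::nat. prime p \<and> real p \<le> x} = Px" unfolding Px_def n_def
    using x by (intro primes_le_real_eq) auto
  have finP: "finite Px" unfolding Px_def by auto
  have n2: "n \<ge> 2" unfolding n_def using x le_nat_floor[of 2 x] by simp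
  have nx: "real n \<le> x" unfolding n_def using x by simp
  define L where "L = ln x"
  have L2: "L \<ge> 2/3" unfolding L_def using x ln2_ge_two_thirds
    by (meson ln_le_cancel_iff order.trans zero_less_numeral order_less_le_trans le_less_trans less_le_trans)
  then have L0: "L > 0" by simp
  define s where "s = 1 + 1/L"
  have s1: "s > 1" using L0 by (simp add: s_def)
  have pP: "\<And>p. p \<in> Px \<Longrightarrow> prime p \<and> real p \<ge> 2 \<and> p \<le> n"
    by (auto simp: Px_def prime_ge_2_nat)
  have "(\<Prod>p\<in>Px. 1 / (1 - 1/real p)) \<le> (\<Prod>p\<in>Px. (1 + real p powr (-s)) * exp (2/real p^2 + ln (real p) / (real p*L)))"
  proof (rule prod_mono)
    fix p assume "p \<in> Px"
    then have p2: "real p \<ge> 2" using pP by blast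
    then have "1 - 1/real p > 0" by (simp add: field_simps)
    then show "0 \<le> 1 / (1 - 1/real p) \<and> 1 / (1 - 1/real p) \<le> (1 + real p powr (-s)) * exp (2/real p^2 + ln (real p) / (real p*L))"
      using local_bound[OF p2 L0 s_def] by simp
  qed
  also have "\<dots> = (\<Prod>p\<in>Px. 1 + real p powr (-s)) * exp (\<Sum>p\<in>Px. 2/real p^2 + ln (real p) / (real p*L))"
    by (simp add: prod.distrib exp_sum[OF finP])
  also have "\<dots> \<le> (s/(s-1)) * exp 4"
  proof (rule mult_mono)
    show "(\<Prod>p\<in>Px. 1 + real p powr (-s)) \<le> s/(s-1)"
      using euler_prod_bound[OF s1 finP] pP by blast
    have "(\<Sum>p\<in>Px. 2/real p^2 + ln (real p) / (real p*L))
        = 2 * (\<Sum>p\<in>Px. 1/real p^2) + (\<Sum>p\<in>Px. ln (real p) / real p) / L"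
      by (simp add: sum.distrib sum_distrib_left sum_divide_distrib)
    also have "\<dots> \<le> 2 * 1 + (2 * ln (real n)) / L"
    proof (intro add_mono mult_left_mono divide_right_mono)
      show "(\<Sum>p\<in>Px. 1/real p^2) \<le> 1"
        using pP by (intro sum_inv_sq_nat finP) (auto simp: prime_ge_2_nat)
      show "(\<Sum>p\<in>Px. ln (real p) / real p) \<le> 2 * ln (real n)"
        unfolding Px_def using n2 by (intro sum_lnp_over_p) auto
    qed (use L0 in auto)
    also have "\<dots> \<le> 4"
    proof -
      have "ln (real n) \<le> L" unfolding L_def using nx n2 by (intro ln_mono) auto
      then have "(2 * ln (real n)) / L \<le> 2" using L0 by (simp add: divide_le_eq)
      then show ?thesis by simp
    qed
    finally show "exp (\<Sum>p\<in>Px. 2/real p^2 + ln (real p) / (real p*L)) \<le> exp 4" by simp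
  qed (use s1 in auto)
  also have "s/(s-1) = 1 + L" using L0 by (simp add: s_def field_simps)
  also have "(1 + L) * exp 4 \<le> (3 * L) * exp 4" using L2 by (intro mult_right_mono) auto
  finally have Q: "(\<Prod>p\<in>Px. 1 / (1 - 1/real p)) \<le> 3 * L * exp 4" .
  have pos: "(\<Prod>p\<in>Px. (1 - 1/real p)) > 0"
  proof (rule prod_pos)
    fix p assume "p \<in> Px"
    then have "real p \<ge> 2" using pP by blast
    then show "0 < 1 - 1/real p" by (simp add: field_simps)
  qed
  have "(\<Prod>p\<in>Px. 1 / (1 - 1/real p)) = 1 / (\<Prod>p\<in>Px. (1 - 1/real p))"
    by (simp add: prod_dividef)
  with Q have "1 / (\<Prod>p\<in>Px. (1 - 1/real p)) \<le> 3 * L * exp 4" by simp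
  then have "1 \<le> (3 * L * exp 4) * (\<Prod>p\<in>Px. (1 - 1/real p))" using pos by (simp add: divide_le_eq mult.commute)
  then have "exp (-4) / (3 * L) \<le> (\<Prod>p\<in>Px. (1 - 1/real p))" using L0
    by (simp add: divide_le_eq exp_minus field_simps)
  then show ?thesis using PxE L_def by simp
qed

lemma kappa_lower:
  fixes a :: real
  assumes a: "a \<ge> 2"
  shows "kappa a \<ge> (exp (-4) / 3) * (1 / (a * ln a))"
proof -
  have "(exp (-4) / 3) * (1 / (a * ln a)) = (1/a) * (exp (-4) / (3 * ln a))" by simp
  also have "\<dots> \<le> (1/a) * (\<Prod>p\<in>{p::nat. prime p \<and> real p \<le> a}. (1 - 1/real p))"
    using mertens_lower[OF a] a by (intro mult_left_mono) auto
  finally show ?thesis by (simp add: kappa_def)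
qed

lemma kappa_nonneg:
  fixes a :: real
  assumes a: "a \<ge> 2"
  shows "kappa a \<ge> 0"
proof -
  have "(exp (-4) / 3) * (1 / (a * ln a)) \<ge> 0" using a by simp
  then show ?thesis using kappa_lower[OF a] by linarith
qed

lemma floor_inj:
  assumes sp: "one_spaced C" and D: "D \<subseteq> C" "D \<subseteq> {2..}"
  shows "inj_on (\<lambda>b. nat \<lfloor>b\<rfloor>) D"
proof (rule inj_onI)
  fix x y assume xy: "x \<in> D" "y \<in> D" "nat \<lfloor>x\<rfloor> = nat \<lfloor>y\<rfloor>"
  have "x \<ge> 2" "y \<ge> 2" using xy D by auto
  then have "0 \<le> \<lfloor>x\<rfloor>" "0 \<le> \<lfloor>y\<rfloor>" by simp_all
  then have "\<lfloor>x\<rfloor> = \<lfloor>y\<rfloor>" using xy(3) eq_nat_nat_iff by blast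
  then have "\<bar>x - y\<bar> < 1" by linarith
  then show "x = y" using sp xy D unfolding one_spaced_def by force
qed

lemma sum_inv_sq_spaced:
  assumes sp: "one_spaced C" and D: "finite D" "D \<subseteq> C" "D \<subseteq> {2..}"
  shows "(\<Sum>b\<in>D. 1 / b^2) \<le> 1"
proof -
  have "(\<Sum>b\<in>D. 1 / b^2) \<le> (\<Sum>b\<in>D. 1 / real (nat \<lfloor>b\<rfloor>) ^ 2)"
  proof (rule sum_mono)
    fix b assume "b \<in> D"
    then have b: "b \<ge> 2" using D by auto
    have h1: "real (nat \<lfloor>b\<rfloor>) \<le> b" using b by simp
    have "2 \<le> nat \<lfloor>b\<rfloor>" using b le_nat_floor[of 2 b] by simp
    then have h2: "real (nat \<lfloor>b\<rfloor>) > 0" using b by simp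
    show "1 / b^2 \<le> 1 / real (nat \<lfloor>b\<rfloor>) ^ 2"
    proof -
      have h3: "\<lfloor>b\<rfloor> \<ge> 2" using b by (simp add: le_floor_iff)
      have q1: "real (nat \<lfloor>b\<rfloor>) ^ 2 \<le> b^2" using power_mono[OF h1 less_imp_le[OF h2], of 2] .
      have q2: "0 < real (nat \<lfloor>b\<rfloor>) ^ 2" using zero_less_power[OF h2, of 2] .
      have q3: "0 < b^2" using b by simp
      show ?thesis using divide_left_mono[OF q1 _ mult_pos_pos[OF q3 q2], of 1] by simp
    qed
  qed
  also have "\<dots> = (\<Sum>k\<in>(\<lambda>b. nat \<lfloor>b\<rfloor>) ` D. 1 / real k ^ 2)"
    using floor_inj[OF sp D(2,3)] by (simp add: sum.reindex)
  also have "\<dots> \<le> 1"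
  proof (rule sum_inv_sq_nat)
    show "(\<lambda>b. nat \<lfloor>b\<rfloor>) ` D \<subseteq> {2..}"
    proof
      fix k assume "k \<in> (\<lambda>b. nat \<lfloor>b\<rfloor>) ` D"
      then obtain b where "b \<in> D" "k = nat \<lfloor>b\<rfloor>" by auto
      moreover have "b \<ge> 2" using \<open>b \<in> D\<close> D by auto
      ultimately show "k \<in> {2..}" using le_nat_floor[of 2 b] by simp
    qed
  qed (use D in auto)
  finally show ?thesis .
qed

lemma card_below:
  assumes sp: "one_spaced C" and D: "finite D" "D \<subseteq> C" "D \<subseteq> {2..}" and a: "a \<ge> 2"
  shows "real (card {b\<in>D. b < a}) \<le> a"
proof -
  have sub: "{b\<in>D. b < a} \<subseteq> D" by auto
  have inj: "inj_on (\<lambda>b. nat \<lfloor>b\<rfloor>) {b\<in>D. b < a}"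
    using inj_on_subset[OF floor_inj[OF sp D(2,3)] sub] .
  have "(\<lambda>b. nat \<lfloor>b\<rfloor>) ` {b\<in>D. b < a} \<subseteq> {1..nat \<lfloor>a\<rfloor>}"
  proof
    fix k assume "k \<in> (\<lambda>b. nat \<lfloor>b\<rfloor>) ` {b\<in>D. b < a}"
    then obtain b where b: "b \<in> D" "b < a" "k = nat \<lfloor>b\<rfloor>" by auto
    have "b \<ge> 2" using b D by auto
    then have "k \<ge> 1" using b le_nat_floor[of 1 b] by simp
    moreover have "k \<le> nat \<lfloor>a\<rfloor>" using b by (simp add: nat_mono floor_mono)
    ultimately show "k \<in> {1..nat \<lfloor>a\<rfloor>}" by simp
  qed
  then have "card ((\<lambda>b. nat \<lfloor>b\<rfloor>) ` {b\<in>D. b < a}) \<le> card {1..nat \<lfloor>a\<rfloor>}"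
    by (intro card_mono) auto
  then have "card {b\<in>D. b < a} \<le> nat \<lfloor>a\<rfloor>" using card_image[OF inj] by simp
  then have "real (card {b\<in>D. b < a}) \<le> real (nat \<lfloor>a\<rfloor>)" by (simp only: of_nat_le_iff)
  also have "\<dots> \<le> a" using a by simp
  finally show ?thesis .
qed

lemma term_bound:
  fixes a b :: real
  assumes b: "b \<ge> 2" and ab: "a > b"
  shows "(1 / (a * ln a)) * (1 / (b * ln b)) * (1 / b + ln b / (a / b))
     \<le> (3/2) * (1 / (a * ln a)) * (1 / b^2) + 1 / (a^2 * ln a)"
proof -
  have a: "a \<ge> 2" using ab b by simp
  have lb: "ln b \<ge> 2/3" using b ln2_ge_two_thirds by (meson ln_le_cancel_iff order.trans zero_less_numeral order_less_le_trans)
  have la: "ln a > 0" using a by simp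
  have eq: "(1 / (a * ln a)) * (1 / (b * ln b)) * (1 / b + ln b / (a / b))
      = (1 / (a * ln a)) * (1 / b^2) * (1 / ln b) + 1 / (a^2 * ln a)"
    using lb la a b by (simp add: field_simps power2_eq_square)
  have "1 / ln b \<le> 3/2" using lb by (simp add: divide_le_eq)
  then have "(1 / (a * ln a)) * (1 / b^2) * (1 / ln b) \<le> (1 / (a * ln a)) * (1 / b^2) * (3/2)"
    using la a b by (intro mult_left_mono) auto
  then show ?thesis unfolding eq by (simp add: mult_ac)
qed

lemma finite_main:
  assumes sp: "one_spaced C" and D: "finite D" "D \<subseteq> C" "D \<subseteq> {2..}"
  shows "(\<Sum>a\<in>D. \<Sum>b\<in>{b\<in>D. b < a}. (1 / (a * ln a)) * (1 / (b * ln b)) * (1 / b + ln b / (a / b)))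
      \<le> 3 * (\<Sum>a\<in>D. 1 / (a * ln a))"
proof -
  have "(\<Sum>a\<in>D. \<Sum>b\<in>{b\<in>D. b < a}. (1 / (a * ln a)) * (1 / (b * ln b)) * (1 / b + ln b / (a / b)))
      \<le> (\<Sum>a\<in>D. 3 * (1 / (a * ln a)))"
  proof (rule sum_mono)
    fix a assume aD: "a \<in> D"
    then have a: "a \<ge> 2" using D by auto
    have la: "ln a > 0" using a by simp
    have "(\<Sum>b\<in>{b\<in>D. b < a}. (1 / (a * ln a)) * (1 / (b * ln b)) * (1 / b + ln b / (a / b)))
        \<le> (\<Sum>b\<in>{b\<in>D. b < a}. (3/2) * (1 / (a * ln a)) * (1 / b^2) + 1 / (a^2 * ln a))"
      using D by (intro sum_mono term_bound) auto
    also have "\<dots> = (3/2) * (1 / (a * ln a)) * (\<Sum>b\<in>{b\<in>D. b < a}. 1 / b^2)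
                     + real (card {b\<in>D. b < a}) * (1 / (a^2 * ln a))"
      by (simp add: sum.distrib sum_distrib_left)
    also have "\<dots> \<le> (3/2) * (1 / (a * ln a)) * 1 + a * (1 / (a^2 * ln a))"
    proof (intro add_mono mult_left_mono mult_right_mono)
      show "(\<Sum>b\<in>{b\<in>D. b < a}. 1 / b^2) \<le> 1"
        using D by (intro sum_inv_sq_spaced[OF sp]) auto
      show "real (card {b\<in>D. b < a}) \<le> a" by (rule card_below[OF sp D a])
    qed (use la a in auto)
    also have "\<dots> = (5/2) * (1 / (a * ln a))" using a la by (simp add: field_simps power2_eq_square)
    also have "\<dots> \<le> 3 * (1 / (a * ln a))" using a la by (intro mult_right_mono) auto
    finally show "(\<Sum>b\<in>{b\<in>D. b < a}. (1 / (a * ln a)) * (1 / (b * ln b)) * (1 / b + ln b / (a / b)))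
        \<le> 3 * (1 / (a * ln a))" .
  qed
  also have "\<dots> = 3 * (\<Sum>a\<in>D. 1 / (a * ln a))" by (simp add: sum_distrib_left)
  finally show ?thesis .
qed

theorem lemma2p14:
  shows "\<exists>K::real. K > 0 \<and> (\<forall>C::real set. C \<subseteq> {2..} \<and> one_spaced C \<longrightarrow>
    (\<Sum>\<^sub>\<infinity>(\<alpha>, \<beta>)\<in>{(\<alpha>, \<beta>). \<alpha> \<in> C \<and> \<beta> \<in> C \<and> \<alpha> > \<beta>}.
        ennreal ((1 / (\<alpha> * ln \<alpha>)) * (1 / (\<beta> * ln \<beta>)) * (1 / \<beta> + ln \<beta> / (\<alpha> / \<beta>))))
      \<le> ennreal K * kappa_set C)"
proof (intro exI[of _ "9 * exp 4"] conjI allI impI)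
  show "(0::real) < 9 * exp 4" by simp
  fix C :: "real set"
  assume CC: "C \<subseteq> {2..} \<and> one_spaced C"
  then have C2: "C \<subseteq> {2..}" and sp: "one_spaced C" by auto
  define f where "f = (\<lambda>\<alpha> \<beta>::real. (1 / (\<alpha> * ln \<alpha>)) * (1 / (\<beta> * ln \<beta>)) * (1 / \<beta> + ln \<beta> / (\<alpha> / \<beta>)))"
  define S where "S = {(\<alpha>, \<beta>). \<alpha> \<in> C \<and> \<beta> \<in> C \<and> \<alpha> > (\<beta>::real)}"
  define K :: real where "K = 9 * exp 4"
  have fnn: "f a b \<ge> 0" if "a \<ge> 2" "b \<ge> 2" for a b
    using that unfolding f_def by (intro mult_nonneg_nonneg add_nonneg_nonneg divide_nonneg_nonneg) auto
  have "(\<Sum>\<^sub>\<infinity>x\<in>S. ennreal (f (fst x) (snd x))) \<le> ennreal K * kappa_set C"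
  proof (rule infsum_le_finite_sums)
    show "(\<lambda>x. ennreal (f (fst x) (snd x))) summable_on S" by (simp add: nonneg_summable_on_complete)
    fix F assume F: "finite F" "F \<subseteq> S"
    define D where "D = fst ` F \<union> snd ` F"
    have finD: "finite D" using F by (simp add: D_def)
    have DC: "D \<subseteq> C" using F by (auto simp: D_def S_def)
    have D2: "D \<subseteq> {2..}" using DC C2 by auto
    define T where "T = Sigma D (\<lambda>a. {b\<in>D. b < a})"
    have finT: "finite T" using finD by (simp add: T_def)
    have FT: "F \<subseteq> T"
    proof
      fix x assume "x \<in> F"
      then obtain a b where x: "x = (a, b)" "(a,b) \<in> F" by (cases x) auto
      then have "a \<in> D" "b \<in> D" by (force simp: D_def)+
      moreover have "b < a" using x F by (auto simp: S_def)
      ultimately show "x \<in> T" using x by (simp add: T_def)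
    qed
    have Tnn: "\<And>x. x \<in> T \<Longrightarrow> f (fst x) (snd x) \<ge> 0"
      using D2 by (auto simp: T_def intro!: fnn)
    have "(\<Sum>x\<in>T. f (fst x) (snd x)) = (\<Sum>a\<in>D. \<Sum>b\<in>{b\<in>D. b < a}. f a b)"
      unfolding T_def using finD by (subst sum.Sigma) (auto simp: case_prod_beta)
    also have "\<dots> \<le> 3 * (\<Sum>a\<in>D. 1 / (a * ln a))"
      unfolding f_def by (rule finite_main[OF sp finD DC D2])
    also have "\<dots> \<le> 3 * (\<Sum>a\<in>D. 3 * exp 4 * kappa a)"
    proof (intro mult_left_mono sum_mono)
      fix a assume "a \<in> D"
      then have a: "a \<ge> 2" using D2 by auto
      have "(exp (-4) / 3) * (1 / (a * ln a)) \<le> kappa a" by (rule kappa_lower[OF a])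
      then have "(3 * exp 4) * ((exp (-4) / 3) * (1 / (a * ln a))) \<le> (3 * exp 4) * kappa a"
        by (intro mult_left_mono) auto
      moreover have "(3 * exp 4) * ((exp (-4) / 3) * (1 / (a * ln a))) = (exp 4 * exp (-4)) * (1 / (a * ln a))"
        by simp
      moreover have "exp 4 * exp (-4) = (1::real)" by (simp add: exp_minus)
      ultimately show "1 / (a * ln a) \<le> 3 * exp 4 * kappa a" by simp
    qed simp
    also have "\<dots> = K * (\<Sum>a\<in>D. kappa a)" by (simp add: K_def sum_distrib_left mult.assoc)
    finally have le1: "(\<Sum>x\<in>T. f (fst x) (snd x)) \<le> K * (\<Sum>a\<in>D. kappa a)" .
    have knn: "\<And>a. a \<in> D \<Longrightarrow> kappa a \<ge> 0" using D2 kappa_nonneg by auto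
    have "ennreal (\<Sum>a\<in>D. kappa a) = (\<Sum>a\<in>D. ennreal (kappa a))"
      using knn by (simp add: sum_ennreal)
    also have "\<dots> = (\<Sum>\<^sub>\<infinity>a\<in>D. ennreal (kappa a))" using finD by simp
    also have "\<dots> \<le> kappa_set C"
      unfolding kappa_set_def using DC by (intro infsum_mono_neutral) (auto simp: nonneg_summable_on_complete)
    finally have kD: "ennreal (\<Sum>a\<in>D. kappa a) \<le> kappa_set C" .
    have "(\<Sum>x\<in>F. ennreal (f (fst x) (snd x))) \<le> (\<Sum>x\<in>T. ennreal (f (fst x) (snd x)))"
      using finT FT by (intro sum_mono2) auto
    also have "\<dots> = ennreal (\<Sum>x\<in>T. f (fst x) (snd x))"
      using Tnn by (simp add: sum_ennreal)
    also have "\<dots> \<le> ennreal (K * (\<Sum>a\<in>D. kappa a))"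
      using le1 by (rule ennreal_leI)
    also have "\<dots> = ennreal K * ennreal (\<Sum>a\<in>D. kappa a)"
      using knn by (intro ennreal_mult) (auto simp: K_def intro: sum_nonneg)
    also have "\<dots> \<le> ennreal K * kappa_set C"
      using kD by (rule mult_left_mono) simp
    finally show "(\<Sum>x\<in>F. ennreal (f (fst x) (snd x))) \<le> ennreal K * kappa_set C" .
  qed
  moreover have e: "(\<lambda>(\<alpha>::real, \<beta>::real). ennreal (f \<alpha> \<beta>)) = (\<lambda>x. ennreal (f (fst x) (snd x)))"
    by (simp add: fun_eq_iff)
  ultimately have "(\<Sum>\<^sub>\<infinity>(\<alpha>, \<beta>)\<in>S. ennreal (f \<alpha> \<beta>)) \<le> ennreal K * kappa_set C"
    by simp
  then show "(\<Sum>\<^sub>\<infinity>(\<alpha>, \<beta>)\<in>{(\<alpha>, \<beta>). \<alpha> \<in> C \<and> \<beta> \<in> C \<and> \<alpha> > \<beta>}.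
        ennreal ((1 / (\<alpha> * ln \<alpha>)) * (1 / (\<beta> * ln \<beta>)) * (1 / \<beta> + ln \<beta> / (\<alpha> / \<beta>))))
      \<le> ennreal (9 * exp 4) * kappa_set C"
    unfolding f_def S_def K_def .
qed

end
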